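(* For every prime $p$ there exists a linear $(p-2,p,p)$-AONT over $\mathbb{F}_p$, i.e. an invertible $p\times p$ matrix over $\mathbb{F}_p$ all of whose $(p-2)\times(p-2)$ submatrices are invertible.
   Context: A linear $(t,s,q)$-AONT over $\mathbb{F}_q$ is given by an invertible $s\times s$ matrix $M$ over $\mathbb{F}_q$ (transform $(y_1,\dots,y_s)=(x_1,\dots,x_s)M^{-1}$); $M$ defines a linear $(t,s,q)$-AONT iff every $t\times t$ submatrix of $M$ is invertible (a $0\times 0$ submatrix counts as invertible). *)

theory Defs
  imports "Jordan_Normal_Form.DL_Submatrix" "Berlekamp_Zassenhaus.Finite_Field"
begin

text \<open>The 0 x 0 matrix counts as invertible.\<close>

definition linear_AONT :: "nat \<Rightarrow> nat \<Rightarrow> 'a::field mat \<Rightarrow> bool" where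
  "linear_AONT t s M \<longleftrightarrow>
     M \<in> carrier_mat s s \<and> invertible_mat M \<and>
     (\<forall>I J. I \<subseteq> {..<s} \<longrightarrow> J \<subseteq> {..<s} \<longrightarrow> card I = t \<longrightarrow> card J = t \<longrightarrow>
        invertible_mat (submatrix M I J))"

end

theory Submission
  imports Defs "Jordan_Normal_Form.Determinant" "Berlekamp_Zassenhaus.Berlekamp_Type_Based"
begin

lemma det_ne0_inv:
  fixes A :: "'a::field mat"
  assumes A: "A \<in> carrier_mat n n" and d: "det A \<noteq> 0"
  shows "\<exists>B. B \<in> carrier_mat n n \<and> A * B = 1\<^sub>m n \<and> B * A = 1\<^sub>m n"
  using det_non_zero_imp_unit[OF A d, of undefined]
  unfolding Units_def ring_mat_def by auto

lemma det_ne0_invertible: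
  fixes A :: "'a::field mat"
  assumes A: "A \<in> carrier_mat n n" and d: "det A \<noteq> 0"
  shows "invertible_mat A"
proof -
  obtain B where B: "B \<in> carrier_mat n n" "A * B = 1\<^sub>m n" "B * A = 1\<^sub>m n"
    using det_ne0_inv[OF A d] by blast
  show ?thesis unfolding invertible_mat_def inverts_mat_def square_mat.simps
    using A B by (intro conjI exI[of _ B]) auto
qed

lemma two_by_two:
  fixes a b c d y1 y2 :: "'a::field"
  assumes "a * d \<noteq> b * c" "a * y1 + b * y2 = 0" "c * y1 + d * y2 = 0"
  shows "y1 = 0 \<and> y2 = 0"
proof -
  have "(a * d - b * c) * y1 = d * (a * y1 + b * y2) - b * (c * y1 + d * y2)" by (simp add: algebra_simps)
  hence 1: "y1 = 0" using assms by simp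
  have "(a * d - b * c) * y2 = a * (c * y1 + d * y2) - c * (a * y1 + b * y2)" by (simp add: algebra_simps)
  hence "y2 = 0" using assms by simp
  with 1 show ?thesis by simp
qed

lemma compl_minor:
  fixes N M :: "'a::field mat"
  assumes N: "N \<in> carrier_mat n n" and M: "M \<in> carrier_mat n n"
    and NM: "N * M = 1\<^sub>m n"
    and two: "\<And>c1 c2 r1 r2. c1 < n \<Longrightarrow> c2 < n \<Longrightarrow> r1 < n \<Longrightarrow> r2 < n \<Longrightarrow> c1 \<noteq> c2 \<Longrightarrow> r1 \<noteq> r2 \<Longrightarrow>
        N $$ (c1, r1) * N $$ (c2, r2) \<noteq> N $$ (c1, r2) * N $$ (c2, r1)"
    and n2: "2 \<le> n"
    and I: "I \<subseteq> {..<n}" and J: "J \<subseteq> {..<n}" and cI: "card I = n - 2" and cJ: "card J = n - 2"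
  shows "invertible_mat (submatrix M I J)"
proof -
  let ?S = "submatrix M I J"
  let ?m = "n - 2"
  have e1: "{i. i < dim_row M \<and> i \<in> I} = I" using M I by auto
  have e2: "{j. j < dim_col M \<and> j \<in> J} = J" using M J by auto
  have S: "?S \<in> carrier_mat ?m ?m"
    unfolding carrier_mat_def mem_Collect_eq dim_submatrix e1 e2 cI cJ by (rule conjI refl)+
  have Sidx: "?S $$ (a, k) = M $$ (pick I a, pick J k)" if "a < ?m" "k < ?m" for a k
    using submatrix_index[of a M I k J] that unfolding e1 e2 cI cJ by blast
  show ?thesis
  proof (rule det_ne0_invertible[OF S], rule notI)
    assume "det ?S = 0"
    then obtain x where x: "x \<in> carrier_vec ?m" "x \<noteq> 0\<^sub>v ?m" "?S *\<^sub>v x = 0\<^sub>v ?m"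
      using det_0_iff_vec_prod_zero_field[OF S] by blast
    define rk where "rk = (\<lambda>j. card {a\<in>J. a < j})"
    define X where "X = vec n (\<lambda>j. if j \<in> J then x $ rk j else 0)"
    define Y where "Y = M *\<^sub>v X"
    have X: "X \<in> carrier_vec n" unfolding X_def by simp
    have Y: "Y \<in> carrier_vec n" unfolding Y_def using M X by simp
    have pickJ: "\<And>k. k < ?m \<Longrightarrow> pick J k \<in> J \<and> rk (pick J k) = k"
      unfolding rk_def using pick_in_set_le card_pick_le cJ by metis
    have pickI: "\<And>k. k < ?m \<Longrightarrow> pick I k \<in> I"
      using pick_in_set_le cI by metis
    have rkJ: "\<And>j. j \<in> J \<Longrightarrow> rk j < ?m \<and> pick J (rk j) = j"
    proof -
      fix j assume j: "j \<in> J"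
      have "{a\<in>J. a < j} \<subset> J" using j by auto
      hence "rk j < card J" unfolding rk_def using psubset_card_mono[OF finite_subset[OF J]] by blast
      thus "rk j < ?m \<and> pick J (rk j) = j" using pick_card_in_set[OF j] cJ unfolding rk_def by simp
    qed
    have YI: "Y $ i = 0" if i: "i \<in> I" for i
    proof -
      define a where "a = card {b\<in>I. b < i}"
      have "{b\<in>I. b < i} \<subset> I" using i by auto
      hence "a < card I" unfolding a_def using psubset_card_mono[OF finite_subset[OF I]] by blast
      hence a: "a < ?m" using cI by simp
      have pa: "pick I a = i" unfolding a_def using pick_card_in_set[OF i] .
      have in_n: "i < n" using i I by auto
      have "Y $ i = (\<Sum>j<n. M $$ (i, j) * X $ j)"
        unfolding Y_def using M X in_n by (simp add: scalar_prod_def row_def lessThan_atLeast0)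
      also have "\<dots> = (\<Sum>j\<in>J. M $$ (i, j) * x $ rk j)"
        using J unfolding X_def by (intro sum.mono_neutral_cong_right) auto
      also have "\<dots> = (\<Sum>k<?m. M $$ (i, pick J k) * x $ k)"
        by (rule sum.reindex_bij_witness[of _ "pick J" rk]) (use pickJ rkJ in auto)
      also have "\<dots> = (\<Sum>k<?m. ?S $$ (a, k) * x $ k)"
        using Sidx[OF a] pa by simp
      also have "\<dots> = (?S *\<^sub>v x) $ a"
        using a x(1) S by (simp add: scalar_prod_def row_def lessThan_atLeast0)
      also have "\<dots> = 0" using x(3) a by simp
      finally show ?thesis .
    qed
    have XNY: "X = N *\<^sub>v Y"
    proof -
      have "N *\<^sub>v Y = (N * M) *\<^sub>v X" unfolding Y_def using N M X by (simp add: assoc_mult_mat_vec)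
      also have "\<dots> = X" using NM X by simp
      finally show ?thesis by simp
    qed
    have Xne: "X \<noteq> 0\<^sub>v n"
    proof
      assume X0: "X = 0\<^sub>v n"
      have "x = 0\<^sub>v ?m"
      proof (rule eq_vecI)
        fix k assume "k < dim_vec (0\<^sub>v ?m :: 'a vec)"
        hence k: "k < ?m" by simp
        have "pick J k < n" using pickJ[OF k] J by auto
        hence "X $ pick J k = 0" using X0 by simp
        thus "x $ k = 0\<^sub>v ?m $ k" using pickJ[OF k] k unfolding X_def
          using \<open>pick J k < n\<close> by simp
      qed (use x(1) in simp)
      with x(2) show False by simp
    qed
    have cIc: "card ({..<n} - I) = 2" using I cI n2 by (simp add: card_Diff_subset finite_subset)
    then obtain r1 r2 where r: "{..<n} - I = {r1, r2}" "r1 \<noteq> r2" by (auto simp: card_2_iff)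
    have cJc: "card ({..<n} - J) = 2" using J cJ n2 by (simp add: card_Diff_subset finite_subset)
    then obtain c1 c2 where c: "{..<n} - J = {c1, c2}" "c1 \<noteq> c2" by (auto simp: card_2_iff)
    have rn: "r1 < n" "r2 < n" "c1 < n" "c2 < n" using r c by auto
    have NY: "(N *\<^sub>v Y) $ j = N $$ (j, r1) * Y $ r1 + N $$ (j, r2) * Y $ r2" if j: "j < n" for j
    proof -
      have "(N *\<^sub>v Y) $ j = (\<Sum>i<n. N $$ (j, i) * Y $ i)"
        using N Y j by (simp add: scalar_prod_def row_def lessThan_atLeast0)
      also have "\<dots> = (\<Sum>i\<in>{r1,r2}. N $$ (j, i) * Y $ i)"
        using r YI by (intro sum.mono_neutral_cong_right) auto
      also have "\<dots> = N $$ (j, r1) * Y $ r1 + N $$ (j, r2) * Y $ r2" using r(2) by simp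
      finally show ?thesis .
    qed
    have Xc: "X $ c1 = 0" "X $ c2 = 0" using c rn unfolding X_def by auto
    have "Y $ r1 = 0 \<and> Y $ r2 = 0"
      by (rule two_by_two[OF two[OF rn(3,4,1,2) c(2) r(2)]])
         (use Xc XNY NY rn in auto)
    hence Y12: "Y $ r1 = 0" "Y $ r2 = 0" by auto
    have "Y = 0\<^sub>v n"
    proof (rule eq_vecI)
      fix i assume "i < dim_vec (0\<^sub>v n :: 'a vec)"
      hence i: "i < n" by simp
      show "Y $ i = 0\<^sub>v n $ i"
      proof (cases "i \<in> I")
        case True thus ?thesis using YI i by simp
      next
        case False
        hence "i \<in> {r1, r2}" using i r(1) by blast
        thus ?thesis using Y12 i by auto
      qed
    qed (use Y in simp)
    hence "X = 0\<^sub>v n" using XNY N by (intro eq_vecI) (auto simp: row_def)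
    with Xne show False by simp
  qed
qed


definition fN :: "'a::field \<Rightarrow> 'a \<Rightarrow> 'a" where
  "fN c y = (if c = 0 then (if y = 0 then 0 else 1) else inverse (y - c))"

lemma fN_two:
  fixes c1 c2 y1 y2 :: "'a::field"
  assumes c: "c1 \<noteq> c2" and y: "y1 \<noteq> y2"
  shows "fN c1 y1 * fN c2 y2 \<noteq> fN c1 y2 * fN c2 y1"
proof (cases "c1 = 0 \<or> c2 = 0")
  case True
  then consider "c1 = 0" "c2 \<noteq> 0" | "c2 = 0" "c1 \<noteq> 0" using c by blast
  thus ?thesis
  proof cases
    case 1
    show ?thesis using 1 y by (cases "y1 = 0"; cases "y2 = 0") (auto simp: fN_def)
  next
    case 2
    show ?thesis using 2 y by (cases "y1 = 0"; cases "y2 = 0") (auto simp: fN_def)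
  qed
next
  case False
  hence nz: "c1 \<noteq> 0" "c2 \<noteq> 0" by auto
  show ?thesis
  proof (cases "y1 = c1 \<or> y2 = c2 \<or> y2 = c1 \<or> y1 = c2")
    case True
    thus ?thesis using nz c y by (auto simp: fN_def)
  next
    case False
    hence d: "y1 - c1 \<noteq> 0" "y2 - c2 \<noteq> 0" "y2 - c1 \<noteq> 0" "y1 - c2 \<noteq> 0" by auto
    have key: "(y2 - c1) * (y1 - c2) - (y1 - c1) * (y2 - c2) = (c2 - c1) * (y1 - y2)"
      by (simp add: algebra_simps)
    have "(c2 - c1) * (y1 - y2) \<noteq> 0" using c y by simp
    hence "(y2 - c1) * (y1 - c2) \<noteq> (y1 - c1) * (y2 - c2)" using key by auto
    thus ?thesis using nz d by (simp add: fN_def field_simps)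
  qed
qed

lemma kerF:
  fixes w :: "'q::prime_card mod_ring \<Rightarrow> 'q mod_ring"
  assumes p3: "CARD('q) \<ge> 3" and H: "\<And>c. (\<Sum>y\<in>UNIV. fN c y * w y) = 0"
  shows "w e = 0"
proof -
  let ?p = "CARD('q)"
  define n where "n = ?p - 2"
  have n1: "n \<ge> 1" "n < ?p - 1" "Suc n = ?p - 1" using p3 unfolding n_def by auto
  have ferm: "x ^ (?p - 1) = 1" if "x \<noteq> 0" for x :: "'q mod_ring"
  proof -
    have "x * x ^ (?p - 1) = x ^ ?p" using p3 by (metis Suc_diff_1 le_trans nat_less_le not_numeral_le_zero
          power_Suc zero_less_iff_neq_zero zero_neq_numeral)
    also have "\<dots> = x" by simp
    finally show ?thesis using that by simp
  qed
  have inv_pow: "inverse x = x ^ n" for x :: "'q mod_ring"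
  proof (cases "x = 0")
    case True thus ?thesis using n1 by simp
  next
    case False
    have "x * x ^ n = 1" using ferm[OF False] n1(3) by (metis power_Suc)
    thus ?thesis by (rule inverse_unique)
  qed
  have fN0: "fN 0 y = y ^ (?p - 1)" for y :: "'q mod_ring"
    using ferm[of y] p3 by (cases "y = 0") (auto simp: fN_def)
  define s where "s m = (\<Sum>y\<in>UNIV. w y * y ^ m)" for m
  have s_top: "s (?p - 1) = 0" using H[of 0] unfolding s_def fN0 by (simp add: mult.commute)
  define a where "a k = of_nat (n choose k) * (-1) ^ k * s (n - k)" for k
  have rowc: "(\<Sum>k\<le>n. a k * c ^ k) = 0" if c: "c \<noteq> 0" for c :: "'q mod_ring"
  proof -
    have binom: "(y - c) ^ n = (\<Sum>k\<le>n. of_nat (n choose k) * (-c) ^ k * y ^ (n - k))" for y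
      using binomial_ring[of "-c" y n] by simp
    have "0 = (\<Sum>y\<in>UNIV. w y * (y - c) ^ n)" using H[of c] c
      by (simp add: fN_def inv_pow mult.commute)
    also have "\<dots> = (\<Sum>y\<in>UNIV. \<Sum>k\<le>n. w y * (of_nat (n choose k) * (-c) ^ k * y ^ (n - k)))"
      by (simp add: binom sum_distrib_left)
    also have "\<dots> = (\<Sum>k\<le>n. \<Sum>y\<in>UNIV. w y * (of_nat (n choose k) * (-c) ^ k * y ^ (n - k)))"
      by (rule sum.swap)
    also have "\<dots> = (\<Sum>k\<le>n. a k * c ^ k)"
    proof (intro sum.cong refl)
      fix k
      have "(\<Sum>y\<in>UNIV. w y * (of_nat (n choose k) * (-c) ^ k * y ^ (n - k)))
          = (\<Sum>y\<in>UNIV. (of_nat (n choose k) * (-1) ^ k * c ^ k) * (w y * y ^ (n - k)))"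
        using power_minus[of c k] by (intro sum.cong refl) (simp only: mult_ac)
      also have "\<dots> = (of_nat (n choose k) * (-1) ^ k * c ^ k) * s (n - k)"
        unfolding s_def by (rule sum_distrib_left[symmetric])
      also have "\<dots> = a k * c ^ k" unfolding a_def by (simp only: mult_ac)
      finally show "(\<Sum>y\<in>UNIV. w y * (of_nat (n choose k) * (-c) ^ k * y ^ (n - k))) = a k * c ^ k" .
    qed
    finally show ?thesis by simp
  qed
  define P where "P = (\<Sum>k\<le>n. monom (a k) k)"
  have polyP: "poly P c = (\<Sum>k\<le>n. a k * c ^ k)" for c
    by (simp add: P_def poly_sum poly_monom)
  have coeffP: "coeff P k = (if k \<le> n then a k else 0)" for k
    by (simp add: P_def coeff_sum coeff_monom)
  have degP: "degree P \<le> n" by (rule degree_le) (simp add: coeffP)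
  have P0: "P = 0"
  proof (rule ccontr)
    assume "P \<noteq> 0"
    hence "card {x. poly P x = 0} \<le> degree P" by (rule card_poly_roots_bound)
    moreover have "UNIV - {0} \<subseteq> {x. poly P x = 0}" using rowc polyP by auto
    hence "card (UNIV - {0 :: 'q mod_ring}) \<le> card {x. poly P x = 0}"
      by (intro card_mono) auto
    moreover have "card (UNIV - {0 :: 'q mod_ring}) = ?p - 1" by (simp add: card_Diff_subset)
    ultimately show False using degP n1 by linarith
  qed
  have binom_nz: "(of_nat (n choose k) :: 'q mod_ring) \<noteq> 0" if k: "k \<le> n" for k
  proof
    assume "(of_nat (n choose k) :: 'q mod_ring) = 0"
    hence "?p dvd (n choose k)" by (rule of_nat_0_mod_ring_dvd)
    hence "?p dvd fact n" using binomial_fact_lemma[OF k] by (metis dvd_mult)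
    hence "?p \<le> n" using prime_dvd_fact_iff[OF prime_card] by blast
    thus False using n1 by simp
  qed
  have s_low: "s m = 0" if m: "m \<le> n" for m
  proof -
    have "coeff P (n - m) = 0" using P0 by simp
    hence "a (n - m) = 0" using coeffP[of "n - m"] by simp
    thus ?thesis using binom_nz[of "n - m"] m unfolding a_def by simp
  qed
  have s_all: "s m = 0" if "m \<le> ?p - 1" for m
  proof (cases "m \<le> n")
    case True thus ?thesis by (rule s_low)
  next
    case False
    hence "m = ?p - 1" using that n1 by linarith
    thus ?thesis using s_top by simp
  qed
  define L where "L = (\<Prod>y\<in>UNIV - {e}. [:- y, 1:])"
  have degL: "degree L \<le> ?p - 1"
  proof -
    have "degree L \<le> sum (degree \<circ> (\<lambda>y. [:- y, 1:])) (UNIV - {e})"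
      unfolding L_def by (rule degree_prod_sum_le) simp
    also have "\<dots> = ?p - 1" by (simp add: card_Diff_subset)
    finally show ?thesis .
  qed
  have "(\<Sum>y\<in>UNIV. w y * poly L y) = (\<Sum>y\<in>UNIV. \<Sum>m\<le>degree L. coeff L m * (w y * y ^ m))"
    by (simp add: poly_altdef sum_distrib_left mult_ac)
  also have "\<dots> = (\<Sum>m\<le>degree L. coeff L m * s m)"
    unfolding s_def by (subst sum.swap) (simp add: sum_distrib_left)
  also have "\<dots> = 0" using degL s_all by (intro sum.neutral) auto
  finally have S0: "(\<Sum>y\<in>UNIV. w y * poly L y) = 0" .
  have polyL: "poly L y = (\<Prod>z\<in>UNIV - {e}. y - z)" for y
    unfolding L_def by (simp add: poly_prod)
  have "(\<Sum>y\<in>UNIV. w y * poly L y) = w e * poly L e + (\<Sum>y\<in>UNIV - {e}. w y * poly L y)"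
    by (simp add: sum.remove)
  also have "(\<Sum>y\<in>UNIV - {e}. w y * poly L y) = 0"
  proof (intro sum.neutral ballI)
    fix y assume y: "y \<in> UNIV - {e}"
    have "poly L y = 0" unfolding polyL using y by (intro prod_zero) auto
    thus "w y * poly L y = 0" by simp
  qed
  finally have "w e * poly L e = 0" using S0 by simp
  moreover have "poly L e \<noteq> 0" unfolding polyL by (subst prod_zero_iff) auto
  ultimately show ?thesis by simp
qed


lemma of_nat_inj_mr:
  fixes i j :: nat
  assumes i: "i < CARD('q::prime_card)" and j: "j < CARD('q)"
    and e: "(of_nat i :: 'q mod_ring) = of_nat j"
  shows "i = j"
proof (rule ccontr)
  assume ne: "i \<noteq> j"
  have gen: "a = b" if a: "a < CARD('q)" and b: "b < CARD('q)" and ab: "a \<le> b"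
    and eab: "(of_nat a :: 'q mod_ring) = of_nat b" for a b
  proof (rule ccontr)
    assume "a \<noteq> b"
    hence lt: "a < b" using ab by simp
    have "(of_nat (b - a) :: 'q mod_ring) = of_nat b - of_nat a" using lt by (simp add: of_nat_diff)
    also have "\<dots> = 0" using eab by simp
    finally have "CARD('q) dvd (b - a)" by (rule of_nat_0_mod_ring_dvd)
    hence "CARD('q) \<le> b - a" using lt by (intro dvd_imp_le) auto
    thus False using b by linarith
  qed
  show False
  proof (cases "i \<le> j")
    case True thus False using gen[OF i j True e] ne by simp
  next
    case False thus False using gen[OF j i _ e[symmetric]] ne by simp
  qed
qed

lemma sum_reindex_mr:
  fixes g :: "'q::prime_card mod_ring \<Rightarrow> 'b::comm_monoid_add"
  shows "(\<Sum>i<CARD('q). g (of_nat i)) = (\<Sum>y\<in>UNIV. g y)"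
proof -
  have inj: "inj_on (of_nat :: nat \<Rightarrow> 'q mod_ring) {..<CARD('q)}"
    by (rule inj_onI) (auto intro: of_nat_inj_mr)
  have im: "(of_nat :: nat \<Rightarrow> 'q mod_ring) ` {..<CARD('q)} = UNIV"
    using surj_of_nat_mod_ring by fastforce
  show ?thesis using sum.reindex[OF inj, of g] unfolding im by simp
qed

theorem corollary2p26:
  fixes p :: nat
  assumes "CARD('q::prime_card) = p"
  shows "\<exists>M :: 'q mod_ring mat. linear_AONT (p - 2) p M"
proof -
  have p2: "p \<ge> 2" using prime_card[where 'a='q] assms prime_ge_2_nat by auto
  define N :: "'q mod_ring mat" where "N = mat p p (\<lambda>(i,j). fN (of_nat i) (of_nat j))"
  have Nc: "N \<in> carrier_mat p p" unfolding N_def by simp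
  have Nidx: "N $$ (i, j) = fN (of_nat i) (of_nat j)" if "i < p" "j < p" for i j
    unfolding N_def using that by simp
  have two: "N $$ (c1, r1) * N $$ (c2, r2) \<noteq> N $$ (c1, r2) * N $$ (c2, r1)"
    if "c1 < p" "c2 < p" "r1 < p" "r2 < p" "c1 \<noteq> c2" "r1 \<noteq> r2" for c1 c2 r1 r2
  proof -
    have "(of_nat c1 :: 'q mod_ring) \<noteq> of_nat c2" using that of_nat_inj_mr assms by metis
    moreover have "(of_nat r1 :: 'q mod_ring) \<noteq> of_nat r2" using that of_nat_inj_mr assms by metis
    ultimately show ?thesis using fN_two Nidx that by metis
  qed
  have eq: "(\<Sum>j<p. N $$ (i, j) * v $ j) = 0"
    if v: "v \<in> carrier_vec p" "N *\<^sub>v v = 0\<^sub>v p" and i: "i < p" for v i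
  proof -
    have "(N *\<^sub>v v) $ i = 0" using v(2) i by simp
    thus ?thesis using Nc v(1) i by (simp add: scalar_prod_def row_def lessThan_atLeast0)
  qed
  have ker: "v = 0\<^sub>v p" if v: "v \<in> carrier_vec p" "N *\<^sub>v v = 0\<^sub>v p" for v
  proof (cases "p = 2")
    case True
    have e0: "N $$ (0, 0) * v $ 0 + N $$ (0, 1) * v $ 1 = 0"
      using eq[OF v, of 0] True by (simp add: numeral_2_eq_2)
    have e1: "N $$ (1, 0) * v $ 0 + N $$ (1, 1) * v $ 1 = 0"
      using eq[OF v, of 1] True by (simp add: numeral_2_eq_2)
    have "v $ 0 = 0 \<and> v $ 1 = 0"
      by (rule two_by_two[OF two[of 0 1 0 1]]) (use True e0 e1 in auto)
    thus ?thesis using v(1) True by (intro eq_vecI) (auto simp: less_2_cases_iff)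
  next
    case False
    hence p3: "CARD('q) \<ge> 3" using p2 assms by simp
    define w where "w y = v $ (SOME j. j < p \<and> of_nat j = y)" for y :: "'q mod_ring"
    have wj: "w (of_nat j) = v $ j" if j: "j < p" for j
    proof -
      have ex: "\<exists>j'. j' < p \<and> (of_nat j' :: 'q mod_ring) = of_nat j" using j by blast
      have "(SOME j'. j' < p \<and> (of_nat j' :: 'q mod_ring) = of_nat j) = j"
        using someI_ex[OF ex] of_nat_inj_mr j assms by metis
      thus ?thesis unfolding w_def by simp
    qed
    have H: "(\<Sum>y\<in>UNIV. fN c y * w y) = 0" for c
    proof -
      obtain i where i: "i < p" "c = of_nat i" using surj_of_nat_mod_ring[of c] assms by blast
      have "(\<Sum>y\<in>UNIV. fN c y * w y) = (\<Sum>j<p. fN c (of_nat j) * w (of_nat j))"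
        using sum_reindex_mr[of "\<lambda>y. fN c y * w y"] assms by simp
      also have "\<dots> = (\<Sum>j<p. N $$ (i, j) * v $ j)"
        using i Nidx wj by (intro sum.cong refl) auto
      also have "\<dots> = 0" using eq[OF v i(1)] .
      finally show ?thesis .
    qed
    show ?thesis
    proof (rule eq_vecI)
      fix j assume "j < dim_vec (0\<^sub>v p :: 'q mod_ring vec)"
      hence j: "j < p" by simp
      show "v $ j = 0\<^sub>v p $ j" using kerF[OF p3 H, of "of_nat j"] wj[OF j] j by simp
    qed (use v(1) in simp)
  qed
  have "det N \<noteq> 0" using det_0_iff_vec_prod_zero_field[OF Nc] ker by blast
  then obtain M where M: "M \<in> carrier_mat p p" "N * M = 1\<^sub>m p" "M * N = 1\<^sub>m p"
    using det_ne0_inv[OF Nc] by blast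
  have invM: "invertible_mat M"
    unfolding invertible_mat_def inverts_mat_def square_mat.simps
    using M Nc by (intro conjI exI[of _ N]) auto
  show ?thesis
  proof (intro exI[of _ M])
    show "linear_AONT (p - 2) p M"
      unfolding linear_AONT_def
      using M(1) invM compl_minor[OF Nc M(1) M(2) two p2] by blast
  qed
qed

end
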